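(* The steady-state download time in the FJ-SM system stochastically dominates those in the FJ-FA and FJ-GA systems (all with the same arrival rate, storage code and service model): for all $x\ge 0$, $\Pr\{T_{\text{FJ-GA}} > x\} \le \Pr\{T_{\text{FJ-SM}} > x\}$ and $\Pr\{T_{\text{FJ-FA}} > x\} \le \Pr\{T_{\text{FJ-SM}} > x\}$.
   Context: Storage model: $k$ objects $f_1,\dots,f_k$ are encoded by a systematic $(n,k)$ linear code on $n$ servers with $(r,t)$-availability: for each systematic server $i$ there are $t$ pairwise disjoint recovery groups of $r$ servers from any one of which $f_i$ can be recovered. Requests arrive as a Poisson process of rate $\lambda$. Fork-Join access: a request for $f_i$ is replicated into one copy at systematic server $i$ and one at each of its $t$ recovery groups; a recovery-group copy is forked into $r$ sub-copies (one per server of the group) and completes when all finish; the request completes when its systematic copy finishes or some recovery-group copy completes, and all its outstanding copies/sub-copies are then removed immediately. Each server has a FCFS queue; service times are independent, each $\mathrm{Exp}(\mu)$. FJ-GA: each request independently asks for $f_i$ with probability $p_i$. FJ-FA: every request asks for the same object. FJ-SM: requests wait in a centralized FCFS queue and the request at its head is admitted to the servers (and served by the Fork-Join scheme) only when all servers are idle. Download time is departure minus arrival time, in steady state; the systems are assumed stable. *)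

theory Defs
  imports "HOL-Probability.Probability"
begin

text \<open>Servers are numbered 0..n-1, objects 0..k-1; server i < k is the systematic
server storing f_i.  The code is given by a k x n generator matrix G over a field
(column s = coded symbol stored at server s, as a linear combination of f_0..f_(k-1)).
rg i g (g < t) is the g-th recovery group of object i.\<close>

definition systematic_code :: "nat \<Rightarrow> nat \<Rightarrow> (nat \<Rightarrow> nat \<Rightarrow> 'f::field) \<Rightarrow> bool" where
  "systematic_code n k G \<longleftrightarrow> 0 < k \<and> k \<le> n \<and>
     (\<forall>i<k. \<forall>s<k. G i s = (if i = s then 1 else 0))"

definition recovers :: "nat \<Rightarrow> (nat \<Rightarrow> nat \<Rightarrow> 'f::field) \<Rightarrow> nat \<Rightarrow> nat set \<Rightarrow> bool" where
  "recovers k G i R \<longleftrightarrow> (\<exists>a. \<forall>l<k. (\<Sum>s\<in>R. a s * G l s) = (if l = i then 1 else 0))"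

definition rt_availability ::
  "nat \<Rightarrow> nat \<Rightarrow> (nat \<Rightarrow> nat \<Rightarrow> 'f::field) \<Rightarrow> nat \<Rightarrow> nat \<Rightarrow> (nat \<Rightarrow> nat \<Rightarrow> nat set) \<Rightarrow> bool" where
  "rt_availability n k G r t rg \<longleftrightarrow>
     (\<forall>i<k. \<forall>g<t. rg i g \<subseteq> {..<n} \<and> card (rg i g) = r \<and> i \<notin> rg i g \<and> recovers k G i (rg i g)) \<and>
     (\<forall>i<k. \<forall>g<t. \<forall>h<t. g \<noteq> h \<longrightarrow> rg i g \<inter> rg i h = {})"

text \<open>Deterministic dynamics given arrival times a j, service requirements sv j s of
the (sub-)copy of request j at server s, and requested objects c j.
av s = time at which server s has been left by all copies of earlier requests
(FCFS).\<close>

definition fj_fin :: "(nat \<Rightarrow> real) \<Rightarrow> (nat \<Rightarrow> nat \<Rightarrow> real) \<Rightarrow> (nat \<Rightarrow> real) \<Rightarrow> nat \<Rightarrow> nat \<Rightarrow> real" where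
  "fj_fin a sv av j s = max (a j) (av s) + sv j s"

definition fj_dep :: "(nat \<Rightarrow> nat \<Rightarrow> nat set) \<Rightarrow> nat \<Rightarrow> (nat \<Rightarrow> real) \<Rightarrow> (nat \<Rightarrow> nat \<Rightarrow> real)
    \<Rightarrow> (nat \<Rightarrow> nat) \<Rightarrow> (nat \<Rightarrow> real) \<Rightarrow> nat \<Rightarrow> real" where
  "fj_dep rg t a sv c av j =
     min (fj_fin a sv av j (c j)) (MIN g\<in>{..<t}. MAX s\<in>rg (c j) g. fj_fin a sv av j s)"

definition copies :: "(nat \<Rightarrow> nat \<Rightarrow> nat set) \<Rightarrow> nat \<Rightarrow> nat \<Rightarrow> nat set" where
  "copies rg t i = insert i (\<Union>g<t. rg i g)"

primrec fj_avail :: "(nat \<Rightarrow> nat \<Rightarrow> nat set) \<Rightarrow> nat \<Rightarrow> (nat \<Rightarrow> real) \<Rightarrow> (nat \<Rightarrow> nat \<Rightarrow> real)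
    \<Rightarrow> (nat \<Rightarrow> nat) \<Rightarrow> nat \<Rightarrow> nat \<Rightarrow> real" where
  "fj_avail rg t a sv c 0 = (\<lambda>s. 0)"
| "fj_avail rg t a sv c (Suc j) = (\<lambda>s.
     if s \<in> copies rg t (c j)
     then max (fj_avail rg t a sv c j s)
              (min (fj_dep rg t a sv c (fj_avail rg t a sv c j) j) (fj_fin a sv (fj_avail rg t a sv c j) j s))
     else fj_avail rg t a sv c j s)"

definition fj_depart :: "(nat \<Rightarrow> nat \<Rightarrow> nat set) \<Rightarrow> nat \<Rightarrow> (nat \<Rightarrow> real) \<Rightarrow> (nat \<Rightarrow> nat \<Rightarrow> real)
    \<Rightarrow> (nat \<Rightarrow> nat) \<Rightarrow> nat \<Rightarrow> real" where
  "fj_depart rg t a sv c j = fj_dep rg t a sv c (fj_avail rg t a sv c j) j"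

text \<open>FJ-SM: the head-of-line request is admitted only when all servers are idle,
i.e. when the previous request has departed; it then starts on all its servers at
max (arrival) (previous departure).\<close>
primrec sm_free :: "(nat \<Rightarrow> nat \<Rightarrow> nat set) \<Rightarrow> nat \<Rightarrow> (nat \<Rightarrow> real) \<Rightarrow> (nat \<Rightarrow> nat \<Rightarrow> real)
    \<Rightarrow> (nat \<Rightarrow> nat) \<Rightarrow> nat \<Rightarrow> real" where
  "sm_free rg t a sv c 0 = 0"
| "sm_free rg t a sv c (Suc j) = fj_dep rg t a sv c (\<lambda>_. sm_free rg t a sv c j) j"

definition sm_depart :: "(nat \<Rightarrow> nat \<Rightarrow> nat set) \<Rightarrow> nat \<Rightarrow> (nat \<Rightarrow> real) \<Rightarrow> (nat \<Rightarrow> nat \<Rightarrow> real)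
    \<Rightarrow> (nat \<Rightarrow> nat) \<Rightarrow> nat \<Rightarrow> real" where
  "sm_depart rg t a sv c j = fj_dep rg t a sv c (\<lambda>_. sm_free rg t a sv c j) j"

definition arrivals :: "(nat \<Rightarrow> 'w \<Rightarrow> real) \<Rightarrow> 'w \<Rightarrow> nat \<Rightarrow> real" where
  "arrivals X \<omega> j = (\<Sum>m\<le>j. X m \<omega>)"

definition fj_time :: "(nat \<Rightarrow> nat \<Rightarrow> nat set) \<Rightarrow> nat \<Rightarrow> (nat \<Rightarrow> 'w \<Rightarrow> real)
    \<Rightarrow> (nat \<Rightarrow> nat \<Rightarrow> 'w \<Rightarrow> real) \<Rightarrow> (nat \<Rightarrow> 'w \<Rightarrow> nat) \<Rightarrow> nat \<Rightarrow> 'w \<Rightarrow> real" where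
  "fj_time rg t X S C j \<omega> =
     fj_depart rg t (arrivals X \<omega>) (\<lambda>j s. S j s \<omega>) (\<lambda>j. C j \<omega>) j - arrivals X \<omega> j"

definition sm_time :: "(nat \<Rightarrow> nat \<Rightarrow> nat set) \<Rightarrow> nat \<Rightarrow> (nat \<Rightarrow> 'w \<Rightarrow> real)
    \<Rightarrow> (nat \<Rightarrow> nat \<Rightarrow> 'w \<Rightarrow> real) \<Rightarrow> (nat \<Rightarrow> 'w \<Rightarrow> nat) \<Rightarrow> nat \<Rightarrow> 'w \<Rightarrow> real" where
  "sm_time rg t X S C j \<omega> =
     sm_depart rg t (arrivals X \<omega>) (\<lambda>j s. S j s \<omega>) (\<lambda>j. C j \<omega>) j - arrivals X \<omega> j"

datatype rv_idx = Inter nat | Serv nat nat | Kind nat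

definition prim_family :: "(nat \<Rightarrow> 'w \<Rightarrow> real) \<Rightarrow> (nat \<Rightarrow> nat \<Rightarrow> 'w \<Rightarrow> real)
    \<Rightarrow> (nat \<Rightarrow> 'w \<Rightarrow> nat) \<Rightarrow> rv_idx \<Rightarrow> 'w \<Rightarrow> real" where
  "prim_family X S C i \<omega> = (case i of Inter j \<Rightarrow> X j \<omega> | Serv j s \<Rightarrow> S j s \<omega> | Kind j \<Rightarrow> real (C j \<omega>))"

definition steady_tail :: "'w measure \<Rightarrow> (nat \<Rightarrow> 'w \<Rightarrow> real) \<Rightarrow> real \<Rightarrow> real" where
  "steady_tail M T x = lim (\<lambda>j. measure M {\<omega> \<in> space M. T j \<omega> > x})"

definition has_steady_state :: "'w measure \<Rightarrow> (nat \<Rightarrow> 'w \<Rightarrow> real) \<Rightarrow> bool" where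
  "has_steady_state M T \<longleftrightarrow> (\<forall>x\<ge>0. convergent (\<lambda>j. measure M {\<omega> \<in> space M. T j \<omega> > x}))"

end

theory Submission
  imports Defs
begin


definition Dl :: "(nat \<Rightarrow> nat \<Rightarrow> nat set) \<Rightarrow> nat \<Rightarrow> (nat \<Rightarrow> nat \<Rightarrow> real) \<Rightarrow> (nat \<Rightarrow> nat) \<Rightarrow> nat \<Rightarrow> real" where
  "Dl rg t sv c j = min (sv j (c j)) (MIN g\<in>{..<t}. MAX s\<in>rg (c j) g. sv j s)"

definition goodrg :: "(nat \<Rightarrow> nat \<Rightarrow> nat set) \<Rightarrow> nat \<Rightarrow> nat \<Rightarrow> bool" where
  "goodrg rg t i \<longleftrightarrow> 0 < t \<and> (\<forall>g<t. finite (rg i g) \<and> rg i g \<noteq> {})"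

lemma fj_dep_const:
  assumes "goodrg rg t (c j)"
  shows "fj_dep rg t a sv c (\<lambda>_. F) j = max (a j) F + Dl rg t sv c j"
proof -
  let ?b = "max (a j) F"
  have fin: "\<And>g. g < t \<Longrightarrow> finite (rg (c j) g) \<and> rg (c j) g \<noteq> {}" and t: "{..<t} \<noteq> {}"
    using assms by (auto simp: goodrg_def)
  have "\<And>g. g < t \<Longrightarrow> (MAX s\<in>rg (c j) g. fj_fin a sv (\<lambda>_. F) j s) = (MAX s\<in>rg (c j) g. sv j s) + ?b"
    unfolding fj_fin_def using fin by (subst add.commute) (rule Max_add_commute, auto)
  hence "(MIN g\<in>{..<t}. MAX s\<in>rg (c j) g. fj_fin a sv (\<lambda>_. F) j s) = (MIN g\<in>{..<t}. (MAX s\<in>rg (c j) g. sv j s) + ?b)"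
    by (intro arg_cong[where f=Min] image_cong) auto
  also have "\<dots> = (MIN g\<in>{..<t}. MAX s\<in>rg (c j) g. sv j s) + ?b"
    by (rule Min_add_commute) (use t in auto)
  finally show ?thesis unfolding fj_dep_def Dl_def fj_fin_def
    by (simp add: min_add_distrib_right algebra_simps)
qed

lemma Dl_nonneg:
  assumes "goodrg rg t (c j)" "\<And>s. 0 \<le> sv j s"
  shows "0 \<le> Dl rg t sv c j"
proof -
  have fin: "\<And>g. g < t \<Longrightarrow> finite (rg (c j) g) \<and> rg (c j) g \<noteq> {}" and t: "{..<t} \<noteq> {}"
    using assms by (auto simp: goodrg_def)
  have "\<And>g. g < t \<Longrightarrow> 0 \<le> (MAX s\<in>rg (c j) g. sv j s)"
    using fin assms(2) by (subst Max_ge_iff) auto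
  then show ?thesis unfolding Dl_def using t assms(2) by (simp add: Min_ge_iff)
qed

lemma fj_dep_mono:
  assumes "goodrg rg t (c j)" "\<And>s. av s \<le> av' s"
  shows "fj_dep rg t a sv c av j \<le> fj_dep rg t a sv c av' j"
proof -
  have fin: "\<And>g. g < t \<Longrightarrow> finite (rg (c j) g) \<and> rg (c j) g \<noteq> {}" and t: "{..<t} \<noteq> {}"
    using assms by (auto simp: goodrg_def)
  have f: "\<And>s. fj_fin a sv av j s \<le> fj_fin a sv av' j s"
    unfolding fj_fin_def using assms(2) by (smt (verit))
  have "\<And>g. g < t \<Longrightarrow> (MAX s\<in>rg (c j) g. fj_fin a sv av j s) \<le> (MAX s\<in>rg (c j) g. fj_fin a sv av' j s)"
  proof -
    fix g assume g: "g < t"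
    show "(MAX s\<in>rg (c j) g. fj_fin a sv av j s) \<le> (MAX s\<in>rg (c j) g. fj_fin a sv av' j s)"
      using fin[OF g] f by (subst Max_le_iff) (auto intro: order.trans[OF _ Max_ge])
  qed
  hence "(MIN g\<in>{..<t}. MAX s\<in>rg (c j) g. fj_fin a sv av j s) \<le> (MIN g\<in>{..<t}. MAX s\<in>rg (c j) g. fj_fin a sv av' j s)"
    using t by (subst Min_ge_iff) (auto intro: order.trans[OF Min_le[where A="(\<lambda>g. MAX s\<in>rg (c j) g. fj_fin a sv av j s) ` {..<t}"]])
  then show ?thesis unfolding fj_dep_def using f by (meson min.mono)
qed

lemma sm_free_Suc:
  assumes "goodrg rg t (c j)"
  shows "sm_free rg t a sv c (Suc j) = max (a j) (sm_free rg t a sv c j) + Dl rg t sv c j"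
  using fj_dep_const[of rg t c j, OF assms] by simp

lemma fj_le_sm:
  assumes good: "\<And>j. goodrg rg t (c j)" and nn: "\<And>j s. 0 \<le> sv j s"
  shows "fj_avail rg t a sv c j s \<le> sm_free rg t a sv c j"
proof (induction j arbitrary: s)
  case 0 then show ?case by simp
next
  case (Suc j)
  have d: "fj_dep rg t a sv c (fj_avail rg t a sv c j) j \<le> sm_free rg t a sv c (Suc j)"
    using fj_dep_mono[of rg t c j, OF good Suc.IH] by simp
  have m: "sm_free rg t a sv c j \<le> sm_free rg t a sv c (Suc j)"
    using sm_free_Suc[of rg t c j, OF good] Dl_nonneg[where rg=rg and t=t and c=c and j=j and sv=sv, OF good nn] by simp
  show ?case using d m Suc.IH[of s] by (auto simp: min.coboundedI1)
qed

lemma fj_depart_le_sm: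
  assumes good: "\<And>j. goodrg rg t (c j)" and nn: "\<And>j s. 0 \<le> sv j s"
  shows "fj_depart rg t a sv c j \<le> sm_depart rg t a sv c j"
  unfolding fj_depart_def sm_depart_def
  by (rule fj_dep_mono[of rg t c j, OF good fj_le_sm[OF good nn]])


lemma fj_dep_cong:
  assumes "a j = a' j" "c j = c' j" "\<And>s. s \<in> copies rg t (c j) \<Longrightarrow> sv j s = sv' j s \<and> av s = av' s"
  shows "fj_dep rg t a sv c av j = fj_dep rg t a' sv' c' av' j"
proof -
  have f: "\<And>s. s \<in> copies rg t (c j) \<Longrightarrow> fj_fin a sv av j s = fj_fin a' sv' av' j s"
    using assms unfolding fj_fin_def by auto
  have "\<And>g. g < t \<Longrightarrow> (MAX s\<in>rg (c j) g. fj_fin a sv av j s) = (MAX s\<in>rg (c' j) g. fj_fin a' sv' av' j s)"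
    using f assms(2) unfolding copies_def by (intro arg_cong[where f=Max] image_cong) auto
  hence "(MIN g\<in>{..<t}. MAX s\<in>rg (c j) g. fj_fin a sv av j s) = (MIN g\<in>{..<t}. MAX s\<in>rg (c' j) g. fj_fin a' sv' av' j s)"
    by (intro arg_cong[where f=Min] image_cong) auto
  moreover have "fj_fin a sv av j (c j) = fj_fin a' sv' av' j (c' j)"
    using f assms(2) by (auto simp: copies_def)
  ultimately show ?thesis unfolding fj_dep_def by simp
qed

lemma sm_free_cong:
  assumes "\<And>m. m < j \<Longrightarrow> a m = a' m \<and> c m = c' m \<and> (\<forall>s\<in>copies rg t (c m). sv m s = sv' m s)"
  shows "sm_free rg t a sv c j = sm_free rg t a' sv' c' j"
  using assms
proof (induction j)
  case 0 then show ?case by simp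
next
  case (Suc j)
  have "sm_free rg t a sv c j = sm_free rg t a' sv' c' j" using Suc by auto
  then show ?case using Suc.prems[of j] by (simp, intro fj_dep_cong) auto
qed

lemma sm_depart_cong:
  assumes "\<And>m. m \<le> j \<Longrightarrow> a m = a' m \<and> c m = c' m \<and> (\<forall>s\<in>copies rg t (c m). sv m s = sv' m s)"
  shows "sm_depart rg t a sv c j = sm_depart rg t a' sv' c' j"
proof -
  have "sm_free rg t a sv c j = sm_free rg t a' sv' c' j" using assms by (intro sm_free_cong) auto
  then show ?thesis unfolding sm_depart_def using assms[of j] by (intro fj_dep_cong) auto
qed

lemma fj_dep_perm:
  assumes "\<pi> i0 = c j" "\<And>g. g < t \<Longrightarrow> \<pi> ` rg i0 g = rg (c j) g"
    "\<And>s. s \<in> copies rg t i0 \<Longrightarrow> sv' j s = sv j (\<pi> s)"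
  shows "fj_dep rg t a sv' (\<lambda>_. i0) (\<lambda>_. F) j = fj_dep rg t a sv c (\<lambda>_. F) j"
proof -
  have f: "\<And>s. s \<in> copies rg t i0 \<Longrightarrow> fj_fin a sv' (\<lambda>_. F) j s = fj_fin a sv (\<lambda>_. F) j (\<pi> s)"
    using assms unfolding fj_fin_def by auto
  have "\<And>g. g < t \<Longrightarrow> (MAX s\<in>rg i0 g. fj_fin a sv' (\<lambda>_. F) j s) = (MAX s\<in>rg (c j) g. fj_fin a sv (\<lambda>_. F) j s)"
  proof -
    fix g assume g: "g < t"
    have "(\<lambda>s. fj_fin a sv' (\<lambda>_. F) j s) ` rg i0 g = (\<lambda>s. fj_fin a sv (\<lambda>_. F) j s) ` (\<pi> ` rg i0 g)"
      using f g unfolding copies_def by (auto simp: image_image intro!: image_cong)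
    then show "(MAX s\<in>rg i0 g. fj_fin a sv' (\<lambda>_. F) j s) = (MAX s\<in>rg (c j) g. fj_fin a sv (\<lambda>_. F) j s)"
      using assms(2)[OF g] by simp
  qed
  hence "(MIN g\<in>{..<t}. MAX s\<in>rg i0 g. fj_fin a sv' (\<lambda>_. F) j s) = (MIN g\<in>{..<t}. MAX s\<in>rg (c j) g. fj_fin a sv (\<lambda>_. F) j s)"
    by (intro arg_cong[where f=Min] image_cong) auto
  moreover have "fj_fin a sv' (\<lambda>_. F) j i0 = fj_fin a sv (\<lambda>_. F) j (c j)"
    using f assms(1) by (auto simp: copies_def)
  ultimately show ?thesis unfolding fj_dep_def by simp
qed

lemma sm_free_perm:
  assumes "\<And>m. m < j \<Longrightarrow> \<pi> m i0 = c m \<and> (\<forall>g<t. \<pi> m ` rg i0 g = rg (c m) g) \<and> (\<forall>s\<in>copies rg t i0. sv' m s = sv m (\<pi> m s))"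
  shows "sm_free rg t a sv' (\<lambda>_. i0) j = sm_free rg t a sv c j"
  using assms
proof (induction j)
  case 0 then show ?case by simp
next
  case (Suc j)
  have "sm_free rg t a sv' (\<lambda>_. i0) j = sm_free rg t a sv c j" using Suc by auto
  then show ?case using Suc.prems[of j] by (simp, intro fj_dep_perm[where \<pi>="\<pi> j"]) auto
qed

lemma sm_depart_perm:
  assumes "\<And>m. m \<le> j \<Longrightarrow> \<pi> m i0 = c m \<and> (\<forall>g<t. \<pi> m ` rg i0 g = rg (c m) g) \<and> (\<forall>s\<in>copies rg t i0. sv' m s = sv m (\<pi> m s))"
  shows "sm_depart rg t a sv' (\<lambda>_. i0) j = sm_depart rg t a sv c j"
proof -
  have "sm_free rg t a sv' (\<lambda>_. i0) j = sm_free rg t a sv c j" using assms by (intro sm_free_perm[where \<pi>=\<pi>]) auto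
  then show ?thesis unfolding sm_depart_def using assms[of j] by (simp, intro fj_dep_perm[where \<pi>="\<pi> j"]) auto
qed


lemma borel_measurable_Max_any:
  fixes h :: "nat \<Rightarrow> 'x \<Rightarrow> real"
  assumes hm: "\<And>s. h s \<in> borel_measurable N"
  shows "(\<lambda>\<omega>. Max ((\<lambda>s. h s \<omega>) ` B)) \<in> borel_measurable N"
proof -
  define Q where "Q n \<omega> \<longleftrightarrow> (\<forall>s\<in>B. \<exists>s'\<in>B \<inter> {..n}. h s \<omega> = h s' \<omega>)" for n \<omega>
  have Qm: "Measurable.pred N (Q n)" for n
    unfolding Q_def using hm by measurable
  have QE: "(\<lambda>s. h s \<omega>) ` B = (\<lambda>s. h s \<omega>) ` (B \<inter> {..n})" if "Q n \<omega>" for n \<omega>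
    using that unfolding Q_def by force
  have nQ: "\<not> finite ((\<lambda>s. h s \<omega>) ` B)" if "\<not> (\<exists>n. Q n \<omega>)" for \<omega>
  proof
    assume fin: "finite ((\<lambda>s. h s \<omega>) ` B)"
    define sel where "sel v = (SOME s. s \<in> B \<and> h s \<omega> = v)" for v
    have sel: "sel v \<in> B \<and> h (sel v) \<omega> = v" if "v \<in> (\<lambda>s. h s \<omega>) ` B" for v
      unfolding sel_def using that by (rule imageE) (rule someI, auto)
    define n where "n = Max (insert 0 (sel ` ((\<lambda>s. h s \<omega>) ` B)))"
    have "Q n \<omega>" unfolding Q_def
    proof
      fix s assume s: "s \<in> B"
      let ?v = "h s \<omega>"
      have "sel ?v \<in> B" "h (sel ?v) \<omega> = ?v" using sel[of ?v] s by auto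
      moreover have "sel ?v \<le> n" unfolding n_def using fin s by (intro Max_ge) auto
      ultimately show "\<exists>s'\<in>B \<inter> {..n}. h s \<omega> = h s' \<omega>" by (intro bexI[of _ "sel ?v"]) auto
    qed
    then show False using that by blast
  qed
  have eq: "Max ((\<lambda>s. h s \<omega>) ` B) = (if \<exists>n. Q n \<omega> then Max ((\<lambda>s. h s \<omega>) ` (B \<inter> {..LEAST n. Q n \<omega>})) else the None)" for \<omega>
  proof (cases "\<exists>n. Q n \<omega>")
    case True
    then have "Q (LEAST n. Q n \<omega>) \<omega>" by (rule LeastI_ex)
    then show ?thesis using True QE by simp
  next
    case False
    then show ?thesis using nQ[OF False] Max.infinite by simp
  qed
  have m1: "(\<lambda>\<omega>. Max ((\<lambda>s. h s \<omega>) ` (B \<inter> {..LEAST n. Q n \<omega>}))) \<in> borel_measurable N"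
  proof (rule measurable_compose_countable[where f="\<lambda>n \<omega>. Max ((\<lambda>s. h s \<omega>) ` (B \<inter> {..n}))"])
    show "\<And>n. (\<lambda>\<omega>. Max ((\<lambda>s. h s \<omega>) ` (B \<inter> {..n}))) \<in> borel_measurable N"
      using hm by (intro borel_measurable_Max) auto
    show "(\<lambda>\<omega>. LEAST n. Q n \<omega>) \<in> measurable N (count_space UNIV)"
      using Qm by (intro measurable_Least) auto
  qed
  have "(\<lambda>\<omega>. if \<exists>n. Q n \<omega> then Max ((\<lambda>s. h s \<omega>) ` (B \<inter> {..LEAST n. Q n \<omega>})) else the None) \<in> borel_measurable N"
    using m1 Qm by measurable
  then show ?thesis unfolding eq .
qed

lemma fj_dep_measurable:
  fixes a :: "nat \<Rightarrow> 'x \<Rightarrow> real" and sv :: "nat \<Rightarrow> nat \<Rightarrow> 'x \<Rightarrow> real" and c :: "nat \<Rightarrow> 'x \<Rightarrow> nat"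
  assumes am: "\<And>m. a m \<in> borel_measurable N" and svm: "\<And>m s. sv m s \<in> borel_measurable N"
    and cm: "\<And>m. c m \<in> measurable N (count_space UNIV)" and Fm: "F \<in> borel_measurable N"
  shows "(\<lambda>\<omega>. fj_dep rg t (\<lambda>m. a m \<omega>) (\<lambda>m s. sv m s \<omega>) (\<lambda>m. c m \<omega>) (\<lambda>_. F \<omega>) j) \<in> borel_measurable N"
proof -
  define fin where "fin s \<omega> = max (a j \<omega>) (F \<omega>) + sv j s \<omega>" for s \<omega>
  have finm: "\<And>s. fin s \<in> borel_measurable N" unfolding fin_def using am svm Fm by measurable
  define H where "H i \<omega> = min (fin i \<omega>) (MIN g\<in>{..<t}. MAX s\<in>rg i g. fin s \<omega>)" for i \<omega>
  have Hm: "\<And>i. H i \<in> borel_measurable N"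
    unfolding H_def using finm
    by (intro borel_measurable_min borel_measurable_Min borel_measurable_Max_any) auto
  have "(\<lambda>\<omega>. H (c j \<omega>) \<omega>) \<in> borel_measurable N"
    by (rule measurable_compose_countable[where f=H, OF Hm cm])
  moreover have "\<And>\<omega>. fj_dep rg t (\<lambda>m. a m \<omega>) (\<lambda>m s. sv m s \<omega>) (\<lambda>m. c m \<omega>) (\<lambda>_. F \<omega>) j = H (c j \<omega>) \<omega>"
    unfolding fj_dep_def H_def fin_def fj_fin_def by simp
  ultimately show ?thesis by simp
qed

lemma sm_free_measurable:
  fixes a :: "nat \<Rightarrow> 'x \<Rightarrow> real" and sv :: "nat \<Rightarrow> nat \<Rightarrow> 'x \<Rightarrow> real" and c :: "nat \<Rightarrow> 'x \<Rightarrow> nat"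
  assumes am: "\<And>m. a m \<in> borel_measurable N" and svm: "\<And>m s. sv m s \<in> borel_measurable N"
    and cm: "\<And>m. c m \<in> measurable N (count_space UNIV)"
  shows "(\<lambda>\<omega>. sm_free rg t (\<lambda>m. a m \<omega>) (\<lambda>m s. sv m s \<omega>) (\<lambda>m. c m \<omega>) j) \<in> borel_measurable N"
proof (induction j)
  case 0 then show ?case by simp
next
  case (Suc j) then show ?case using fj_dep_measurable[OF am svm cm Suc] by simp
qed

lemma sm_depart_measurable:
  fixes a :: "nat \<Rightarrow> 'x \<Rightarrow> real" and sv :: "nat \<Rightarrow> nat \<Rightarrow> 'x \<Rightarrow> real" and c :: "nat \<Rightarrow> 'x \<Rightarrow> nat"
  assumes am: "\<And>m. a m \<in> borel_measurable N" and svm: "\<And>m s. sv m s \<in> borel_measurable N"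
    and cm: "\<And>m. c m \<in> measurable N (count_space UNIV)"
  shows "(\<lambda>\<omega>. sm_depart rg t (\<lambda>m. a m \<omega>) (\<lambda>m s. sv m s \<omega>) (\<lambda>m. c m \<omega>) j) \<in> borel_measurable N"
  unfolding sm_depart_def using fj_dep_measurable[OF am svm cm sm_free_measurable[OF am svm cm]] .

lemma sm_time_measurable:
  fixes X :: "nat \<Rightarrow> 'x \<Rightarrow> real" and S :: "nat \<Rightarrow> nat \<Rightarrow> 'x \<Rightarrow> real" and C :: "nat \<Rightarrow> 'x \<Rightarrow> nat"
  assumes Xm: "\<And>m. X m \<in> borel_measurable N" and Sm: "\<And>m s. S m s \<in> borel_measurable N"
    and Cm: "\<And>m. C m \<in> measurable N (count_space UNIV)"
  shows "sm_time rg t X S C j \<in> borel_measurable N"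
proof -
  have am: "\<And>m. (\<lambda>\<omega>. arrivals X \<omega> m) \<in> borel_measurable N"
    unfolding arrivals_def using Xm by measurable
  have "(\<lambda>\<omega>. sm_depart rg t (\<lambda>m. arrivals X \<omega> m) (\<lambda>m s. S m s \<omega>) (\<lambda>m. C m \<omega>) j - arrivals X \<omega> j) \<in> borel_measurable N"
    using sm_depart_measurable[OF am Sm Cm] am by measurable
  then show ?thesis unfolding sm_time_def[abs_def] by (simp add: eta_contract_eq)
qed


lemma bij_groups:
  assumes "\<And>g. g < T \<Longrightarrow> finite (A g) \<and> finite (B g) \<and> card (A g) = card (B g)"
    and "disjoint_family_on A {..<T}" and "disjoint_family_on B {..<T}"
  shows "\<exists>f. bij_betw f (\<Union>g<(T::nat). A g) (\<Union>g<T. B g) \<and> (\<forall>g<T. f ` A g = B g)"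
  using assms
proof (induction T)
  case 0 then show ?case by (auto simp: bij_betw_def)
next
  case (Suc T)
  have dA: "disjoint_family_on A {..<T}" and dB: "disjoint_family_on B {..<T}"
    using Suc.prems(2,3) by (auto simp: disjoint_family_on_def)
  obtain f where f: "bij_betw f (\<Union>g<T. A g) (\<Union>g<T. B g)" "\<forall>g<T. f ` A g = B g"
    using Suc.IH[OF _ dA dB] Suc.prems(1) by auto
  obtain h where h: "bij_betw h (A T) (B T)"
    using Suc.prems(1)[of T] finite_same_card_bij by blast
  define f' where "f' s = (if s \<in> A T then h s else f s)" for s
  have AT: "(\<Union>g<T. A g) \<inter> A T = {}" and BT: "(\<Union>g<T. B g) \<inter> B T = {}"
  proof -
    have "\<And>g. g < T \<Longrightarrow> A g \<inter> A T = {} \<and> B g \<inter> B T = {}"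
      using Suc.prems(2,3) unfolding disjoint_family_on_def by simp
    then show "(\<Union>g<T. A g) \<inter> A T = {}" "(\<Union>g<T. B g) \<inter> B T = {}" by blast+
  qed
  have b1: "bij_betw f' (\<Union>g<T. A g) (\<Union>g<T. B g)"
  proof -
    have "bij_betw f' (\<Union>g<T. A g) (\<Union>g<T. B g) = bij_betw f (\<Union>g<T. A g) (\<Union>g<T. B g)"
      by (rule bij_betw_cong) (use AT in \<open>auto simp: f'_def\<close>)
    then show ?thesis using f(1) by simp
  qed
  have b2: "bij_betw f' (A T) (B T)"
  proof -
    have "bij_betw f' (A T) (B T) = bij_betw h (A T) (B T)"
      by (rule bij_betw_cong) (auto simp: f'_def)
    then show ?thesis using h by simp
  qed
  have "bij_betw f' ((\<Union>g<T. A g) \<union> A T) ((\<Union>g<T. B g) \<union> B T)"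
    by (rule bij_betw_combine[OF b1 b2 BT])
  moreover have "(\<Union>g<Suc T. A g) = (\<Union>g<T. A g) \<union> A T" "(\<Union>g<Suc T. B g) = (\<Union>g<T. B g) \<union> B T"
    by (auto simp: lessThan_Suc)
  moreover have "\<forall>g<Suc T. f' ` A g = B g"
  proof (intro allI impI)
    fix g assume g: "g < Suc T"
    show "f' ` A g = B g"
    proof (cases "g = T")
      case True then show ?thesis using h by (auto simp: f'_def bij_betw_def)
    next
      case False
      then have "g < T" using g by simp
      then have "A g \<inter> A T = {}" using AT by auto
      then have "f' ` A g = f ` A g" by (auto simp: f'_def)
      then show ?thesis using f(2) \<open>g < T\<close> by simp
    qed
  qed
  ultimately show ?case by auto
qed

lemma copies_sub:
  assumes avail: "rt_availability n k G r t rg" and i: "i < k" and kn: "k \<le> n"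
  shows "copies rg t i \<subseteq> {..<n}"
proof -
  have "\<forall>g<t. rg i g \<subseteq> {..<n}" using avail i unfolding rt_availability_def by auto
  then show ?thesis using i kn unfolding copies_def by auto
qed

lemma card_copies:
  assumes avail: "rt_availability n k G r t rg" and i: "i < k"
  shows "card (copies rg t i) = Suc (t * r)"
proof -
  have fin: "\<And>g. g < t \<Longrightarrow> finite (rg i g)"
    using avail i unfolding rt_availability_def by (metis finite_lessThan finite_subset)
  have "card (\<Union>g<t. rg i g) = (\<Sum>g<t. card (rg i g))"
    using avail i fin unfolding rt_availability_def by (intro card_UN_disjoint) auto
  also have "\<dots> = t * r" using avail i unfolding rt_availability_def by simp
  finally show ?thesis unfolding copies_def using avail i fin unfolding rt_availability_def
    by (subst card_insert_disjoint) auto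
qed

definition grp :: "(nat \<Rightarrow> nat \<Rightarrow> nat set) \<Rightarrow> nat \<Rightarrow> nat \<Rightarrow> nat \<Rightarrow> nat \<Rightarrow> nat set" where
  "grp rg t n i g = (if g < t then rg i g else if g = t then {i} else {..<n} - copies rg t i)"

lemma grp_props:
  assumes avail: "rt_availability n k G r t rg" and i: "i < k" and kn: "k \<le> n"
  shows "disjoint_family_on (grp rg t n i) {..<Suc (Suc t)}"
    "(\<Union>g<Suc (Suc t). grp rg t n i g) = {..<n}"
    "\<And>g. g < Suc (Suc t) \<Longrightarrow> finite (grp rg t n i g)"
    "\<And>g. g < Suc (Suc t) \<Longrightarrow> card (grp rg t n i g) = (if g < t then r else if g = t then 1 else n - Suc (t * r))"
proof -
  have av1: "\<And>g. g < t \<Longrightarrow> rg i g \<subseteq> {..<n} \<and> card (rg i g) = r \<and> i \<notin> rg i g"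
    and av2: "\<And>g h. g < t \<Longrightarrow> h < t \<Longrightarrow> g \<noteq> h \<Longrightarrow> rg i g \<inter> rg i h = {}"
    using avail i unfolding rt_availability_def by auto
  have cs: "copies rg t i \<subseteq> {..<n}" by (rule copies_sub[OF avail i kn])
  have sub: "\<And>g. g < Suc t \<Longrightarrow> grp rg t n i g \<subseteq> copies rg t i"
    unfolding grp_def copies_def by auto
  show "disjoint_family_on (grp rg t n i) {..<Suc (Suc t)}"
    unfolding disjoint_family_on_def
  proof (intro ballI impI)
    fix g h assume g: "g \<in> {..<Suc (Suc t)}" and h: "h \<in> {..<Suc (Suc t)}" and gh: "g \<noteq> h"
    show "grp rg t n i g \<inter> grp rg t n i h = {}"
    proof (cases "g < Suc t \<and> h < Suc t")
      case True
      then show ?thesis using av1 av2 gh unfolding grp_def by auto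
    next
      case False
      have gS: "grp rg t n i (Suc t) = {..<n} - copies rg t i" by (simp add: grp_def)
      from False g h gh have "(g = Suc t \<and> h < Suc t) \<or> (h = Suc t \<and> g < Suc t)" by auto
      then show ?thesis
      proof
        assume "g = Suc t \<and> h < Suc t" then show ?thesis using gS sub[of h] by blast
      next
        assume "h = Suc t \<and> g < Suc t" then show ?thesis using gS sub[of g] by blast
      qed
    qed
  qed
  show "(\<Union>g<Suc (Suc t). grp rg t n i g) = {..<n}"
  proof
    show "(\<Union>g<Suc (Suc t). grp rg t n i g) \<subseteq> {..<n}"
    proof -
      have "\<And>g. g < Suc (Suc t) \<Longrightarrow> grp rg t n i g \<subseteq> {..<n}"
      proof -
        fix g assume g: "g < Suc (Suc t)"
        show "grp rg t n i g \<subseteq> {..<n}"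
        proof (cases "g < Suc t")
          case True then show ?thesis using sub[OF True] cs by blast
        next
          case False then show ?thesis by (auto simp: grp_def)
        qed
      qed
      then show ?thesis by blast
    qed
    show "{..<n} \<subseteq> (\<Union>g<Suc (Suc t). grp rg t n i g)"
    proof
      fix s assume s: "s \<in> {..<n}"
      show "s \<in> (\<Union>g<Suc (Suc t). grp rg t n i g)"
      proof (cases "s \<in> copies rg t i")
        case True
        then consider "s = i" | g where "g < t" "s \<in> rg i g" unfolding copies_def by auto
        then show ?thesis
        proof cases
          case 1 then show ?thesis by (intro UN_I[of t]) (auto simp: grp_def)
        next
          case 2 then show ?thesis by (intro UN_I[of g]) (auto simp: grp_def)
        qed
      next
        case False then show ?thesis using s by (intro UN_I[of "Suc t"]) (auto simp: grp_def)
      qed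
    qed
  qed
  show "\<And>g. g < Suc (Suc t) \<Longrightarrow> finite (grp rg t n i g)"
    using av1 unfolding grp_def by (auto intro: finite_subset)
  show "\<And>g. g < Suc (Suc t) \<Longrightarrow> card (grp rg t n i g) = (if g < t then r else if g = t then 1 else n - Suc (t * r))"
  proof -
    have "card ({..<n} - copies rg t i) = n - Suc (t * r)"
      using card_copies[OF avail i] cs by (subst card_Diff_subset) (auto intro: finite_subset)
    then show "\<And>g. g < Suc (Suc t) \<Longrightarrow> card (grp rg t n i g) = (if g < t then r else if g = t then 1 else n - Suc (t * r))"
      using av1 unfolding grp_def by (auto simp: less_Suc_eq)
  qed
qed

lemma perm_exists:
  assumes avail: "rt_availability n k G r t rg" and i0: "i0 < k" and i: "i < k" and kn: "k \<le> n"
  shows "\<exists>\<pi>. bij_betw \<pi> {..<n} {..<n} \<and> \<pi> i0 = i \<and> (\<forall>g<t. \<pi> ` rg i0 g = rg i g)"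
proof -
  note A = grp_props[OF avail i0 kn] and B = grp_props[OF avail i kn]
  obtain f where f: "bij_betw f (\<Union>g<Suc (Suc t). grp rg t n i0 g) (\<Union>g<Suc (Suc t). grp rg t n i g)"
    "\<forall>g<Suc (Suc t). f ` grp rg t n i0 g = grp rg t n i g"
    using bij_groups[of "Suc (Suc t)" "grp rg t n i0" "grp rg t n i"] A B by auto
  have "f ` {i0} = {i}" using f(2)[rule_format, of t] by (simp add: grp_def)
  moreover have "\<forall>g<t. f ` rg i0 g = rg i g"
  proof (intro allI impI)
    fix g assume "g < t" then show "f ` rg i0 g = rg i g" using f(2)[rule_format, of g] by (simp add: grp_def)
  qed
  ultimately show ?thesis using f(1) A(2) B(2) by auto
qed


locale fjmodel = prob_space M for M :: "'w measure" +
  fixes n k r t :: nat and G :: "nat \<Rightarrow> nat \<Rightarrow> 'f::field" and rg :: "nat \<Rightarrow> nat \<Rightarrow> nat set"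
    and lam mu :: real and p :: "nat \<Rightarrow> real" and i0 :: nat
    and X :: "nat \<Rightarrow> 'w \<Rightarrow> real" and S :: "nat \<Rightarrow> nat \<Rightarrow> 'w \<Rightarrow> real" and C :: "nat \<Rightarrow> 'w \<Rightarrow> nat"
  assumes code: "systematic_code n k G"
    and avail: "rt_availability n k G r t rg"
    and r_pos: "1 \<le> r" and t_pos: "1 \<le> t"
    and p_sum: "(\<Sum>i<k. p i) = 1"
    and i0: "i0 < k"
    and indep: "indep_vars (\<lambda>_. borel) (prim_family X S C) UNIV"
    and S_exp: "\<forall>j s. distributed M lborel (S j s) (exponential_density mu)"
    and C_law: "\<forall>j. \<forall>i<k. measure M {\<omega> \<in> space M. C j \<omega> = i} = p i"
begin

lemma kn: "k \<le> n" using code by (simp add: systematic_code_def)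

lemma rvY: "random_variable borel (prim_family X S C i)"
  using indep unfolding indep_vars_def by auto

lemma Xm[measurable]: "X m \<in> borel_measurable M"
  using rvY[of "Inter m"] by (simp add: prim_family_def[abs_def])

lemma Sm[measurable]: "S m s \<in> borel_measurable M"
  using rvY[of "Serv m s"] by (simp add: prim_family_def[abs_def])

lemma Crm: "(\<lambda>\<omega>. real (C m \<omega>)) \<in> borel_measurable M"
  using rvY[of "Kind m"] by (simp add: prim_family_def[abs_def])

lemma Cm[measurable]: "C m \<in> measurable M (count_space UNIV)"
proof (subst measurable_count_space_eq2_countable, intro conjI ballI)
  show "C m \<in> space M \<rightarrow> UNIV" by simp
  fix i :: nat
  have "C m -` {i} \<inter> space M = (\<lambda>\<omega>. real (C m \<omega>)) -` {real i} \<inter> space M" by auto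
  also have "\<dots> \<in> sets M" using Crm by (rule measurable_sets) simp
  finally show "C m -` {i} \<inter> space M \<in> sets M" .
qed

lemma good: "i < k \<Longrightarrow> goodrg rg t i"
proof -
  assume i: "i < k"
  have "\<And>g. g < t \<Longrightarrow> card (rg i g) = r" using avail i unfolding rt_availability_def by auto
  then show "goodrg rg t i" using r_pos t_pos unfolding goodrg_def
    by (metis card.empty card.infinite not_one_le_zero gr0I less_le_trans zero_less_one)
qed

lemma AE_S_nonneg: "AE \<omega> in M. \<forall>m s. 0 \<le> S m s \<omega>"
proof -
  have "AE \<omega> in M. 0 \<le> S m s \<omega>" for m s
  proof -
    have "emeasure M (S m s -` {..<0} \<inter> space M) = (\<integral>\<^sup>+x. ennreal (exponential_density mu x) * indicator {..<0} x \<partial>lborel)"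
      using S_exp by (intro distributed_emeasure) auto
    also have "\<dots> = 0"
      by (rule trans[OF nn_integral_cong[where v="\<lambda>_. 0"]]) (auto simp: exponential_density_def indicator_def)
    finally have "emeasure M (S m s -` {..<0} \<inter> space M) = 0" by simp
    moreover have "{\<omega> \<in> space M. \<not> 0 \<le> S m s \<omega>} = S m s -` {..<0} \<inter> space M" by auto
    moreover have "S m s -` {..<0} \<inter> space M \<in> sets M" by measurable
    ultimately show ?thesis by (subst AE_iff_measurable) auto
  qed
  then show ?thesis by (simp add: AE_all_countable)
qed

lemma prob_C_lt: "prob {\<omega> \<in> space M. C m \<omega> < k} = 1"
proof -
  have "{\<omega> \<in> space M. C m \<omega> < k} = (\<Union>i<k. {\<omega> \<in> space M. C m \<omega> = i})" by auto
  then have "prob {\<omega> \<in> space M. C m \<omega> < k} = (\<Sum>i<k. prob {\<omega> \<in> space M. C m \<omega> = i})"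
    by (simp, intro finite_measure_finite_Union) (auto simp: disjoint_family_on_def)
  also have "\<dots> = 1" using C_law p_sum by simp
  finally show ?thesis .
qed

lemma AE_C_lt: "AE \<omega> in M. \<forall>m. C m \<omega> < k"
proof -
  have "AE \<omega> in M. C m \<omega> < k" for m
  proof -
    have "AE \<omega> in M. \<omega> \<in> {\<omega> \<in> space M. C m \<omega> < k}"
      using prob_C_lt by (subst AE_in_set_eq_1) auto
    then show ?thesis by auto
  qed
  then show ?thesis by (simp add: AE_all_countable)
qed

lemma sm_tail_sets:
  assumes "\<And>m. C' m \<in> measurable M (count_space UNIV)"
  shows "{\<omega> \<in> space M. x < sm_time rg t X S C' j \<omega>} \<in> sets M"
proof -
  have "sm_time rg t X S C' j \<in> borel_measurable M"
    by (rule sm_time_measurable[OF Xm Sm assms])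
  then show ?thesis by measurable
qed

lemma GA_le: "measure M {\<omega> \<in> space M. x < fj_time rg t X S C j \<omega>} \<le> measure M {\<omega> \<in> space M. x < sm_time rg t X S C j \<omega>}"
proof (rule finite_measure_mono_AE)
  show "{\<omega> \<in> space M. x < sm_time rg t X S C j \<omega>} \<in> sets M" by (rule sm_tail_sets[OF Cm])
  show "AE \<omega> in M. \<omega> \<in> {\<omega> \<in> space M. x < fj_time rg t X S C j \<omega>} \<longrightarrow> \<omega> \<in> {\<omega> \<in> space M. x < sm_time rg t X S C j \<omega>}"
    using AE_S_nonneg AE_C_lt
  proof eventually_elim
    case (elim \<omega>)
    have "fj_depart rg t (arrivals X \<omega>) (\<lambda>j s. S j s \<omega>) (\<lambda>j. C j \<omega>) j \<le> sm_depart rg t (arrivals X \<omega>) (\<lambda>j s. S j s \<omega>) (\<lambda>j. C j \<omega>) j"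
      using elim good by (intro fj_depart_le_sm) auto
    then show ?case unfolding fj_time_def sm_time_def by auto
  qed
qed

lemma FA_le: "measure M {\<omega> \<in> space M. x < fj_time rg t X S (\<lambda>j \<omega>. i0) j \<omega>} \<le> measure M {\<omega> \<in> space M. x < sm_time rg t X S (\<lambda>j \<omega>. i0) j \<omega>}"
proof (rule finite_measure_mono_AE)
  show "{\<omega> \<in> space M. x < sm_time rg t X S (\<lambda>j \<omega>. i0) j \<omega>} \<in> sets M" by (rule sm_tail_sets) simp
  show "AE \<omega> in M. \<omega> \<in> {\<omega> \<in> space M. x < fj_time rg t X S (\<lambda>j \<omega>. i0) j \<omega>} \<longrightarrow> \<omega> \<in> {\<omega> \<in> space M. x < sm_time rg t X S (\<lambda>j \<omega>. i0) j \<omega>}"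
    using AE_S_nonneg
  proof eventually_elim
    case (elim \<omega>)
    have "fj_depart rg t (arrivals X \<omega>) (\<lambda>j s. S j s \<omega>) (\<lambda>j. i0) j \<le> sm_depart rg t (arrivals X \<omega>) (\<lambda>j s. S j s \<omega>) (\<lambda>j. i0) j"
      using elim good i0 by (intro fj_depart_le_sm) auto
    then show ?case unfolding fj_time_def sm_time_def by auto
  qed
qed

end


definition IXS :: "nat \<Rightarrow> nat \<Rightarrow> rv_idx set" where
  "IXS J n = Inter ` {..J} \<union> (\<lambda>(m,s). Serv m s) ` ({..J} \<times> {..<n})"

definition IK :: "nat \<Rightarrow> rv_idx set" where
  "IK J = Kind ` {..J}"

definition Phi :: "(nat \<Rightarrow> nat \<Rightarrow> nat set) \<Rightarrow> nat \<Rightarrow> (nat \<Rightarrow> nat) \<Rightarrow> nat \<Rightarrow> (rv_idx \<Rightarrow> real) \<Rightarrow> real" where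
  "Phi rg t c J v = sm_time rg t (\<lambda>m v. v (Inter m)) (\<lambda>m s v. v (Serv m s)) (\<lambda>m v. c m) J v"

lemma IXS_simps[simp]: "Serv m s \<in> IXS J n \<longleftrightarrow> m \<le> J \<and> s < n" "Inter m \<in> IXS J n \<longleftrightarrow> m \<le> J" "Kind m \<notin> IXS J n"
  unfolding IXS_def by (auto intro: rev_image_eqI[of "(m, s)"])

lemma IK_simps[simp]: "Kind m \<in> IK J \<longleftrightarrow> m \<le> J" "Inter m \<notin> IK J" "Serv m s \<notin> IK J"
  unfolding IK_def by auto

lemma finite_IXS: "finite (IXS J n)" unfolding IXS_def by auto
lemma finite_IK: "finite (IK J)" unfolding IK_def by auto

lemma sm_time_cong:
  assumes "\<And>m. m \<le> J \<Longrightarrow> X m \<omega> = X' m \<omega>'"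
    and "\<And>m s. m \<le> J \<Longrightarrow> s \<in> copies rg t (c m) \<Longrightarrow> S m s \<omega> = S' m s \<omega>'"
  shows "sm_time rg t X S (\<lambda>m _. c m) J \<omega> = sm_time rg t X' S' (\<lambda>m _. c m) J \<omega>'"
proof -
  have a: "\<And>m. m \<le> J \<Longrightarrow> arrivals X \<omega> m = arrivals X' \<omega>' m"
    unfolding arrivals_def using assms(1) by (intro sum.cong) auto
  show ?thesis unfolding sm_time_def using a assms(2)
    by (subst sm_depart_cong[where a'="arrivals X' \<omega>'" and sv'="\<lambda>j s. S' j s \<omega>'" and c'="\<lambda>j. c j"]) auto
qed

lemma comp_meas_any: "(\<lambda>v. v i) \<in> borel_measurable (PiM I (\<lambda>_. borel :: real measure))"
proof (cases "i \<in> I")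
  case True then show ?thesis by measurable
next
  case False
  have "(\<lambda>v. undefined :: real) \<in> borel_measurable (PiM I (\<lambda>_. borel))" by simp
  then show ?thesis
    by (rule measurable_cong[THEN iffD1, rotated]) (use False in \<open>auto simp: space_PiM PiE_def extensional_def\<close>)
qed

lemma Phi_measurable: "Phi rg t c J \<in> borel_measurable (PiM I (\<lambda>_. borel :: real measure))"
  unfolding Phi_def[abs_def]
  by (rule sm_time_measurable) (auto intro: comp_meas_any)

context fjmodel begin

abbreviation Y where "Y \<equiv> prim_family X S C"

lemma Phi_repr:
  assumes "\<And>m. m \<le> J \<Longrightarrow> c m < k"
  shows "sm_time rg t X S (\<lambda>m _. c m) J \<omega> = Phi rg t c J (\<lambda>i\<in>IXS J n. Y i \<omega>)"
  unfolding Phi_def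
proof (rule sm_time_cong)
  show "\<And>m. m \<le> J \<Longrightarrow> X m \<omega> = (\<lambda>i\<in>IXS J n. Y i \<omega>) (Inter m)"
    by (auto simp: IXS_def prim_family_def)
  fix m s assume m: "m \<le> J" and s: "s \<in> copies rg t (c m)"
  have "s < n" using copies_sub[OF avail assms[OF m] kn] s by auto
  then show "S m s \<omega> = (\<lambda>i\<in>IXS J n. Y i \<omega>) (Serv m s)"
    using m by (auto simp: IXS_def prim_family_def)
qed

lemma Ym: "(\<lambda>\<omega>. Y i \<omega>) \<in> borel_measurable M" using rvY[of i] by simp

lemma indep_split:
  "indep_var (PiM (IXS J n) (\<lambda>_. borel)) (\<lambda>\<omega>. \<lambda>i\<in>IXS J n. Y i \<omega>) (PiM (IK J) (\<lambda>_. borel)) (\<lambda>\<omega>. \<lambda>i\<in>IK J. Y i \<omega>)"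
proof -
  have "indep_vars (\<lambda>b. PiM (case_bool (IXS J n) (IK J) b) (\<lambda>_. borel)) (\<lambda>b \<omega>. restrict (\<lambda>i. Y i \<omega>) (case_bool (IXS J n) (IK J) b)) UNIV"
    by (rule indep_vars_restrict[OF indep]) (auto simp: disjoint_family_on_def IXS_def IK_def split: bool.split)
  then show ?thesis unfolding indep_var_def
    by (rule indep_vars_cong[THEN iffD1, rotated -1]) (auto split: bool.split)
qed

lemma L_Serv: "distr M borel (S m s) = distr M borel (S m' s')"
proof -
  have "distr M borel (S m s) = distr M lborel (S m s)" for m s by (rule distr_cong) auto
  moreover have "distr M lborel (S m s) = density lborel (exponential_density mu)" for m s
    using S_exp by (simp add: distributed_distr_eq_density)
  ultimately show ?thesis by simp
qed

lemma space_PiM_borel: "space (PiM I (\<lambda>i. distr M borel (Y i))) = space (PiM I (\<lambda>_. borel :: real measure))"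
  by (simp add: space_PiM)

lemma sets_PiM_borel: "sets (PiM I (\<lambda>i. distr M borel (Y i))) = sets (PiM I (\<lambda>_. borel :: real measure))"
  by (rule sets_PiM_cong) auto

lemma law_XS: "distr M (PiM (IXS J n) (\<lambda>_. borel)) (\<lambda>\<omega>. \<lambda>i\<in>IXS J n. Y i \<omega>) = PiM (IXS J n) (\<lambda>i. distr M borel (Y i))"
proof -
  have "indep_vars (\<lambda>_. borel) Y (IXS J n)" by (rule indep_vars_subset[OF indep]) auto
  moreover have "IXS J n \<noteq> {}" by (auto simp: IXS_def)
  ultimately show ?thesis using indep_vars_iff_distr_eq_PiM'[where I="IXS J n" and M'="\<lambda>_. borel" and X=Y] rvY by simp
qed

lemma vXS_meas: "(\<lambda>\<omega>. \<lambda>i\<in>IXS J n. Y i \<omega>) \<in> measurable M (PiM (IXS J n) (\<lambda>_. borel))"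
  using rvY by (intro measurable_restrict) auto

lemma symm:
  assumes c: "\<And>m. m \<le> J \<Longrightarrow> c m < k"
  shows "prob ((\<lambda>\<omega>. \<lambda>i\<in>IXS J n. Y i \<omega>) -` {v \<in> space (PiM (IXS J n) (\<lambda>_. borel)). x < Phi rg t c J v} \<inter> space M)
       = prob ((\<lambda>\<omega>. \<lambda>i\<in>IXS J n. Y i \<omega>) -` {v \<in> space (PiM (IXS J n) (\<lambda>_. borel)). x < Phi rg t (\<lambda>_. i0) J v} \<inter> space M)"
proof -
  let ?I = "IXS J n"
  let ?B = "PiM ?I (\<lambda>_. borel :: real measure)"
  let ?L = "\<lambda>i. distr M borel (Y i)"
  let ?P = "PiM ?I ?L"
  define A where "A d = {v \<in> space ?B. x < Phi rg t d J v}" for d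
  have A_sets: "A d \<in> sets ?B" for d
    unfolding A_def using Phi_measurable[of rg t d J ?I] by measurable
  have pr: "prob ((\<lambda>\<omega>. \<lambda>i\<in>?I. Y i \<omega>) -` A d \<inter> space M) = measure ?P (A d)" for d
    using measure_distr[OF vXS_meas A_sets, of d] law_XS by simp
  have "\<forall>m. \<exists>\<pi>. m \<le> J \<longrightarrow> bij_betw \<pi> {..<n} {..<n} \<and> \<pi> i0 = c m \<and> (\<forall>g<t. \<pi> ` rg i0 g = rg (c m) g)"
    using perm_exists[OF avail i0 _ kn] c by blast
  then obtain \<pi> where \<pi>: "\<And>m. m \<le> J \<Longrightarrow> bij_betw (\<pi> m) {..<n} {..<n} \<and> \<pi> m i0 = c m \<and> (\<forall>g<t. \<pi> m ` rg i0 g = rg (c m) g)"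
    by metis
  define \<sigma> where "\<sigma> i = (case i of Serv m s \<Rightarrow> (if m \<le> J \<and> s < n then Serv m (\<pi> m s) else Serv m s) | _ \<Rightarrow> i)" for i
  have \<sigma>I: "\<sigma> \<in> ?I \<rightarrow> ?I"
  proof
    fix i assume "i \<in> ?I"
    have "\<And>m s. m \<le> J \<Longrightarrow> s < n \<Longrightarrow> \<pi> m s < n" using \<pi> by (meson bij_betwE lessThan_iff)
    then show "\<sigma> i \<in> ?I" using \<open>i \<in> ?I\<close> unfolding \<sigma>_def by (cases i) auto
  qed
  have \<sigma>inj: "inj_on \<sigma> ?I"
  proof
    fix i j assume i: "i \<in> ?I" and j: "j \<in> ?I" and eq: "\<sigma> i = \<sigma> j"
    show "i = j"
    proof (cases i)
      case (Serv m s)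
      with i have ms: "m \<le> J" "s < n" by auto
      then show ?thesis using j eq Serv \<pi>[OF ms(1)] unfolding \<sigma>_def
        by (cases j) (auto simp: bij_betw_def inj_on_def)
    qed (use i j eq in \<open>auto simp: \<sigma>_def split: rv_idx.splits\<close>)
  qed
  have Lsig: "?L (\<sigma> i) = ?L i" for i
    unfolding \<sigma>_def by (cases i) (auto simp: prim_family_def[abs_def] intro: L_Serv)
  have probL: "\<And>i. i \<in> ?I \<Longrightarrow> prob_space (?L i)" by (intro prob_space_distr) (use rvY in auto)
  have reidx: "distr ?P (PiM ?I (\<lambda>i. ?L (\<sigma> i))) (\<lambda>\<omega>. \<lambda>i\<in>?I. \<omega> (\<sigma> i)) = PiM ?I (\<lambda>i. ?L (\<sigma> i))"
    by (rule distr_PiM_reindex[OF probL \<sigma>inj \<sigma>I])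
  have PL: "PiM ?I (\<lambda>i. ?L (\<sigma> i)) = ?P" using Lsig by (intro PiM_cong) auto
  have Rm: "(\<lambda>\<omega>. \<lambda>i\<in>?I. \<omega> (\<sigma> i)) \<in> measurable ?P ?P"
  proof (rule measurable_restrict)
    fix i assume "i \<in> ?I"
    then have "\<sigma> i \<in> ?I" using \<sigma>I by auto
    then have "(\<lambda>\<omega>. \<omega> (\<sigma> i)) \<in> measurable ?P (?L (\<sigma> i))" by (rule measurable_component_singleton)
    then show "(\<lambda>\<omega>. \<omega> (\<sigma> i)) \<in> measurable ?P (?L i)" using Lsig[of i] by simp
  qed
  have pw: "Phi rg t (\<lambda>_. i0) J (\<lambda>i\<in>?I. v (\<sigma> i)) = Phi rg t c J v" for v
  proof -
    have "Phi rg t (\<lambda>_. i0) J (\<lambda>i\<in>?I. v (\<sigma> i)) = sm_time rg t (\<lambda>m v. v (Inter m)) (\<lambda>m s v. v (Serv m (\<pi> m s))) (\<lambda>m v. i0) J v"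
      unfolding Phi_def
    proof (rule sm_time_cong)
      show "\<And>m. m \<le> J \<Longrightarrow> (\<lambda>i\<in>?I. v (\<sigma> i)) (Inter m) = v (Inter m)"
        by (auto simp: IXS_def \<sigma>_def)
      fix m s assume m: "m \<le> J" and s: "s \<in> copies rg t i0"
      have "s < n" using copies_sub[OF avail i0 kn] s by auto
      then show "(\<lambda>i\<in>?I. v (\<sigma> i)) (Serv m s) = v (Serv m (\<pi> m s))"
        using m by (auto simp: IXS_def \<sigma>_def)
    qed
    also have "\<dots> = Phi rg t c J v"
      unfolding Phi_def sm_time_def using \<pi>
      by (subst sm_depart_perm[where \<pi>=\<pi> and sv="\<lambda>m s. v (Serv m s)"]) auto
    finally show ?thesis .
  qed
  have sA: "A c = (\<lambda>\<omega>. \<lambda>i\<in>?I. \<omega> (\<sigma> i)) -` A (\<lambda>_. i0) \<inter> space ?P"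
  proof -
    have "(\<lambda>i\<in>?I. v (\<sigma> i)) \<in> space ?B" for v by (simp add: space_PiM)
    then show ?thesis unfolding A_def space_PiM_borel using pw by auto
  qed
  have "measure ?P (A c) = measure (distr ?P ?P (\<lambda>\<omega>. \<lambda>i\<in>?I. \<omega> (\<sigma> i))) (A (\<lambda>_. i0))"
    unfolding sA using A_sets sets_PiM_borel by (subst measure_distr[OF Rm]) auto
  also have "\<dots> = measure ?P (A (\<lambda>_. i0))" using reidx PL by simp
  finally show ?thesis using pr unfolding A_def by simp
qed

end


context fjmodel begin

lemma sm_time_congC:
  assumes "\<And>m. m \<le> J \<Longrightarrow> C m \<omega> = c m"
  shows "sm_time rg t X S C J \<omega> = sm_time rg t X S (\<lambda>m _. c m) J \<omega>"
  unfolding sm_time_def using assms by (subst sm_depart_cong[where c'="\<lambda>m. c m"]) auto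

lemma SM_eq:
  "measure M {\<omega> \<in> space M. x < sm_time rg t X S C J \<omega>} = measure M {\<omega> \<in> space M. x < sm_time rg t X S (\<lambda>j \<omega>. i0) J \<omega>}"
proof -
  define vXS where "vXS \<omega> = (\<lambda>i\<in>IXS J n. Y i \<omega>)" for \<omega>
  define vK where "vK \<omega> = (\<lambda>i\<in>IK J. Y i \<omega>)" for \<omega>
  define CS where "CS = PiE {..J} (\<lambda>_. {..<k})"
  define E where "E c = {\<omega> \<in> space M. \<forall>m\<in>{..J}. C m \<omega> = c m}" for c
  define T where "T c = {\<omega> \<in> space M. x < sm_time rg t X S (\<lambda>m _. c m) J \<omega>}" for c
  define T0 where "T0 = {\<omega> \<in> space M. x < sm_time rg t X S (\<lambda>j \<omega>. i0) J \<omega>}"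
  define SMC where "SMC = {\<omega> \<in> space M. x < sm_time rg t X S C J \<omega>}"
  define Gd where "Gd = {\<omega> \<in> space M. \<forall>m\<in>{..J}. C m \<omega> < k}"
  define AXS where "AXS c = {v \<in> space (PiM (IXS J n) (\<lambda>_. borel)). x < Phi rg t c J v}" for c
  define BK where "BK c = {v \<in> space (PiM (IK J) (\<lambda>_. borel :: real measure)). \<forall>m\<in>{..J}. v (Kind m) = real (c m)}" for c
  have finCS: "finite CS" unfolding CS_def by (auto intro: finite_PiE)
  have E_sets: "E c \<in> sets M" for c unfolding E_def by measurable
  have T_sets: "T c \<in> sets M" for c unfolding T_def by (rule sm_tail_sets) simp
  have T0_sets: "T0 \<in> sets M" unfolding T0_def by (rule sm_tail_sets) simp
  have SMC_sets: "SMC \<in> sets M" unfolding SMC_def by (rule sm_tail_sets[OF Cm])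
  have Gd_sets: "Gd \<in> sets M" unfolding Gd_def by measurable
  have AXS_sets: "AXS c \<in> sets (PiM (IXS J n) (\<lambda>_. borel))" for c
    unfolding AXS_def using Phi_measurable[of rg t c J "IXS J n"] by measurable
  have BK_sets: "BK c \<in> sets (PiM (IK J) (\<lambda>_. borel))" for c
  proof -
    have "\<And>m. (\<lambda>v. v (Kind m)) \<in> borel_measurable (PiM (IK J) (\<lambda>_. borel :: real measure))"
      by (rule comp_meas_any)
    then show ?thesis unfolding BK_def by measurable
  qed
  have vXS_sp: "vXS \<omega> \<in> space (PiM (IXS J n) (\<lambda>_. borel))" for \<omega> unfolding vXS_def by (simp add: space_PiM)
  have vK_sp: "vK \<omega> \<in> space (PiM (IK J) (\<lambda>_. borel :: real measure))" for \<omega> unfolding vK_def by (simp add: space_PiM)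
  have repr: "\<And>c \<omega>. c \<in> CS \<Longrightarrow> sm_time rg t X S (\<lambda>m _. c m) J \<omega> = Phi rg t c J (vXS \<omega>)"
    unfolding vXS_def CS_def by (rule Phi_repr) auto
  have repr0: "\<And>\<omega>. sm_time rg t X S (\<lambda>j \<omega>. i0) J \<omega> = Phi rg t (\<lambda>_. i0) J (vXS \<omega>)"
    unfolding vXS_def using Phi_repr[of J "\<lambda>_. i0"] i0 by simp
  have ET: "E c \<inter> T c = (\<lambda>\<omega>. (vXS \<omega>, vK \<omega>)) -` (AXS c \<times> BK c) \<inter> space M" if c: "c \<in> CS" for c
    using repr[OF c] vXS_sp vK_sp unfolding E_def T_def AXS_def BK_def vK_def
    by (auto simp: prim_family_def)
  have pT: "prob ((vXS -` AXS c) \<inter> space M) = prob T0" if c: "c \<in> CS" for c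
  proof -
    have "prob ((vXS -` AXS c) \<inter> space M) = prob ((vXS -` AXS (\<lambda>_. i0)) \<inter> space M)"
      unfolding vXS_def AXS_def by (rule symm) (use c in \<open>auto simp: CS_def\<close>)
    also have "(vXS -` AXS (\<lambda>_. i0)) \<inter> space M = T0"
      unfolding T0_def AXS_def using repr0 vXS_sp by auto
    finally show ?thesis .
  qed
  have pE: "prob ((vK -` BK c) \<inter> space M) = prob (E c)" for c
  proof -
    have "(vK -` BK c) \<inter> space M = E c"
      using vK_sp unfolding E_def BK_def vK_def by (auto simp: prim_family_def)
    then show ?thesis by simp
  qed
  have pET: "prob (E c \<inter> T c) = prob T0 * prob (E c)" if c: "c \<in> CS" for c
  proof -
    have "prob (E c \<inter> T c) = prob ((vXS -` AXS c) \<inter> space M) * prob ((vK -` BK c) \<inter> space M)"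
      unfolding ET[OF c] vXS_def vK_def using indep_split[of J] AXS_sets BK_sets
      by (intro indep_varD) auto
    then show ?thesis using pT[OF c] pE by simp
  qed
  have UE: "Gd = (\<Union>c\<in>CS. E c)"
  proof
    show "Gd \<subseteq> (\<Union>c\<in>CS. E c)"
    proof
      fix \<omega> assume w: "\<omega> \<in> Gd"
      then have "restrict (\<lambda>m. C m \<omega>) {..J} \<in> CS" "\<omega> \<in> E (restrict (\<lambda>m. C m \<omega>) {..J})"
        unfolding Gd_def CS_def E_def by auto
      then show "\<omega> \<in> (\<Union>c\<in>CS. E c)" by blast
    qed
    show "(\<Union>c\<in>CS. E c) \<subseteq> Gd" unfolding Gd_def CS_def E_def by auto
  qed
  have UET: "SMC \<inter> Gd = (\<Union>c\<in>CS. E c \<inter> T c)"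
  proof
    show "SMC \<inter> Gd \<subseteq> (\<Union>c\<in>CS. E c \<inter> T c)"
    proof
      fix \<omega> assume w: "\<omega> \<in> SMC \<inter> Gd"
      let ?c = "restrict (\<lambda>m. C m \<omega>) {..J}"
      have "?c \<in> CS" "\<omega> \<in> E ?c" using w unfolding Gd_def CS_def E_def by auto
      moreover have "\<omega> \<in> T ?c" using w sm_time_congC[of J \<omega> ?c] unfolding SMC_def T_def by auto
      ultimately show "\<omega> \<in> (\<Union>c\<in>CS. E c \<inter> T c)" by blast
    qed
    show "(\<Union>c\<in>CS. E c \<inter> T c) \<subseteq> SMC \<inter> Gd"
    proof
      fix \<omega> assume "\<omega> \<in> (\<Union>c\<in>CS. E c \<inter> T c)"
      then obtain c where c: "c \<in> CS" "\<omega> \<in> E c" "\<omega> \<in> T c" by blast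
      then have "\<omega> \<in> Gd" using UE by blast
      moreover have "\<omega> \<in> SMC" using c sm_time_congC[of J \<omega> c] unfolding SMC_def T_def E_def by auto
      ultimately show "\<omega> \<in> SMC \<inter> Gd" by blast
    qed
  qed
  have disj: "disjoint_family_on E CS"
    unfolding disjoint_family_on_def E_def CS_def
    by (auto simp: PiE_def extensional_def fun_eq_iff) (metis atMost_iff linorder_not_le)+
  have disjT: "disjoint_family_on (\<lambda>c. E c \<inter> T c) CS"
    using disj unfolding disjoint_family_on_def by blast
  have AEGd: "AE \<omega> in M. \<omega> \<in> Gd"
    using AE_C_lt AE_space by eventually_elim (auto simp: Gd_def)
  have pGd: "prob Gd = 1" using AEGd Gd_sets by (subst AE_in_set_eq_1[symmetric]) auto
  have pSMC: "prob SMC = prob (SMC \<inter> Gd)"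
  proof (rule antisym)
    show "prob SMC \<le> prob (SMC \<inter> Gd)"
      using AEGd SMC_sets Gd_sets by (intro finite_measure_mono_AE) auto
    show "prob (SMC \<inter> Gd) \<le> prob SMC" using SMC_sets by (intro finite_measure_mono) auto
  qed
  have "prob (SMC \<inter> Gd) = (\<Sum>c\<in>CS. prob (E c \<inter> T c))"
    unfolding UET using finCS disjT E_sets T_sets by (intro finite_measure_finite_Union) auto
  also have "\<dots> = prob T0 * (\<Sum>c\<in>CS. prob (E c))" using pET by (simp add: sum_distrib_left)
  also have "(\<Sum>c\<in>CS. prob (E c)) = prob Gd"
    unfolding UE using finCS disj E_sets by (intro finite_measure_finite_Union[symmetric]) auto
  finally show ?thesis using pSMC pGd unfolding SMC_def T0_def by simp
qed

end

theorem lemma5: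
  fixes M :: "'w measure"
    and n k r t :: nat
    and G :: "nat \<Rightarrow> nat \<Rightarrow> 'f::field"
    and rg :: "nat \<Rightarrow> nat \<Rightarrow> nat set"
    and lam mu :: real
    and p :: "nat \<Rightarrow> real"
    and i0 :: nat
    and X :: "nat \<Rightarrow> 'w \<Rightarrow> real"
    and S :: "nat \<Rightarrow> nat \<Rightarrow> 'w \<Rightarrow> real"
    and C :: "nat \<Rightarrow> 'w \<Rightarrow> nat"
  assumes code: "systematic_code n k G"
    and avail: "rt_availability n k G r t rg"
    and r_pos: "1 \<le> r" and t_pos: "1 \<le> t"
    and lam_pos: "0 < lam" and mu_pos: "0 < mu"
    and p_nonneg: "\<forall>i<k. 0 \<le> p i" and p_sum: "(\<Sum>i<k. p i) = 1"
    and i0: "i0 < k"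
    and M: "prob_space M"
    and indep: "prob_space.indep_vars M (\<lambda>_. borel) (prim_family X S C) UNIV"
    and X_exp: "\<forall>j. distributed M lborel (X j) (exponential_density lam)"
    and S_exp: "\<forall>j s. distributed M lborel (S j s) (exponential_density mu)"
    and C_law: "\<forall>j. \<forall>i<k. measure M {\<omega> \<in> space M. C j \<omega> = i} = p i"
    and stable_GA: "has_steady_state M (fj_time rg t X S C)"
    and stable_FA: "has_steady_state M (fj_time rg t X S (\<lambda>j \<omega>. i0))"
    and stable_SM: "has_steady_state M (sm_time rg t X S C)"
  shows "\<forall>x\<ge>0.
           steady_tail M (fj_time rg t X S C) x \<le> steady_tail M (sm_time rg t X S C) x \<and>
           steady_tail M (fj_time rg t X S (\<lambda>j \<omega>. i0)) x \<le> steady_tail M (sm_time rg t X S C) x"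
  proof -
  interpret fjmodel M n k r t G rg lam mu p i0 X S C
    by (intro fjmodel.intro fjmodel_axioms.intro M code avail r_pos t_pos p_sum i0 indep S_exp C_law)
  show ?thesis
  proof (intro allI impI conjI)
    fix x :: real assume x: "0 \<le> x"
    let ?sm = "\<lambda>j. measure M {\<omega> \<in> space M. sm_time rg t X S C j \<omega> > x}"
    let ?ga = "\<lambda>j. measure M {\<omega> \<in> space M. fj_time rg t X S C j \<omega> > x}"
    let ?fa = "\<lambda>j. measure M {\<omega> \<in> space M. fj_time rg t X S (\<lambda>j \<omega>. i0) j \<omega> > x}"
    have csm: "?sm \<longlonglongrightarrow> lim ?sm" using stable_SM x unfolding has_steady_state_def
      by (simp add: convergent_LIMSEQ_iff)
    have cga: "?ga \<longlonglongrightarrow> lim ?ga" using stable_GA x unfolding has_steady_state_def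
      by (simp add: convergent_LIMSEQ_iff)
    have cfa: "?fa \<longlonglongrightarrow> lim ?fa" using stable_FA x unfolding has_steady_state_def
      by (simp add: convergent_LIMSEQ_iff)
    have "lim ?ga \<le> lim ?sm"
      by (rule LIMSEQ_le[OF cga csm]) (use GA_le in auto)
    then show "steady_tail M (fj_time rg t X S C) x \<le> steady_tail M (sm_time rg t X S C) x"
      unfolding steady_tail_def .
    have "\<And>j. ?fa j \<le> ?sm j"
    proof -
      fix j
      have "?fa j \<le> measure M {\<omega> \<in> space M. x < sm_time rg t X S (\<lambda>j \<omega>. i0) j \<omega>}"
        using FA_le[of x j] by simp
      also have "\<dots> = ?sm j" using SM_eq[of x j] by simp
      finally show "?fa j \<le> ?sm j" .
    qed
    then have "lim ?fa \<le> lim ?sm"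
      by (intro LIMSEQ_le[OF cfa csm]) auto
    then show "steady_tail M (fj_time rg t X S (\<lambda>j \<omega>. i0)) x \<le> steady_tail M (sm_time rg t X S C) x"
      unfolding steady_tail_def .
  qed
qed

end
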